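(* Let $G$ be a compact Abelian group with a continuous length function $l$, and let $(H_n)_{n\in\mathbb{N}}$ be closed subgroups of $G$ converging to $G$ for the Hausdorff distance of $d_l(g,g')=l(g^{-1}g')$. For each $n$ let $J_n\subseteq\widehat G$ be the annihilator of $H_n$. Let $F$ be a finite subset of $\widehat G\setminus\{1\}$. Then there exists $N\in\mathbb{N}$ such that $J_n\cap F=\varnothing$ for all $n\ge N$.
   Context: A length function: $l\ge0$, $l(g)=0$ iff $g$ is the unit, symmetric, subadditive. $1$ denotes the trivial character. *)

theory Defs
  imports "HOL-Analysis.Analysis"
begin

text \<open>Abelian groups are written additively: the unit is 0, g^{-1} g' is (-g) + g'.\<close>

definition length_function :: "('a::ab_group_add \<Rightarrow> real) \<Rightarrow> bool" where
  "length_function l \<longleftrightarrow>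
     (\<forall>g. 0 \<le> l g) \<and> (\<forall>g. l g = 0 \<longleftrightarrow> g = 0) \<and> (\<forall>g. l (- g) = l g) \<and>
     (\<forall>g h. l (g + h) \<le> l g + l h)"

definition dist_l :: "('a::ab_group_add \<Rightarrow> real) \<Rightarrow> 'a \<Rightarrow> 'a \<Rightarrow> real" where
  "dist_l l g g' = l (- g + g')"

definition hausdorff_dist_l :: "('a::ab_group_add \<Rightarrow> real) \<Rightarrow> 'a set \<Rightarrow> 'a set \<Rightarrow> real" where
  "hausdorff_dist_l l A B =
     max (SUP a\<in>A. INF b\<in>B. dist_l l a b) (SUP b\<in>B. INF a\<in>A. dist_l l a b)"

definition is_subgroup :: "'a::ab_group_add set \<Rightarrow> bool" where
  "is_subgroup H \<longleftrightarrow> 0 \<in> H \<and> (\<forall>x\<in>H. \<forall>y\<in>H. x + y \<in> H) \<and> (\<forall>x\<in>H. - x \<in> H)"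

definition is_character :: "('a::{topological_space, ab_group_add} \<Rightarrow> complex) \<Rightarrow> bool" where
  "is_character c \<longleftrightarrow> continuous_on UNIV c \<and> (\<forall>g. cmod (c g) = 1) \<and>
     (\<forall>g h. c (g + h) = c g * c h)"

definition dual_group :: "('a::{topological_space, ab_group_add} \<Rightarrow> complex) set" where
  "dual_group = {c. is_character c}"

definition annihilator :: "'a::{topological_space, ab_group_add} set \<Rightarrow> ('a \<Rightarrow> complex) set" where
  "annihilator H = {c \<in> dual_group. \<forall>h\<in>H. c h = 1}"

end

theory Submission
  imports Defs
begin

lemma char_zero:
  assumes "c \<in> dual_group" shows "c 0 = 1"
proof -
  have m: "cmod (c 0) = 1" and h: "c (0 + 0) = c 0 * c 0"
    using assms unfolding dual_group_def is_character_def by blast+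
  have "c 0 \<noteq> 0" using m by auto
  with h show ?thesis by simp
qed

lemma char_delta:
  fixes l :: "'a::{topological_ab_group_add, t2_space} \<Rightarrow> real"
  assumes cpt: "compact (UNIV :: 'a set)"
    and lf: "length_function l" and lc: "continuous_on UNIV l"
    and c: "c \<in> dual_group" and g: "c g \<noteq> 1"
  shows "\<exists>\<delta>>0. \<forall>x. l x < \<delta> \<longrightarrow> c x \<noteq> c g"
proof -
  define e where "e = cmod (c g - 1)"
  define K where "K = {x. e \<le> cmod (c x - 1)}"
  have cc: "continuous_on UNIV c" using c unfolding dual_group_def is_character_def by blast
  have "continuous_on UNIV (\<lambda>x. cmod (c x - 1))"
    by (intro continuous_intros cc)
  hence "closed K" unfolding K_def
    by (simp add: closed_Collect_le continuous_on_const)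
  hence cK: "compact K" using cpt compact_Int_closed[of UNIV K] by simp
  have gK: "g \<in> K" unfolding K_def e_def by simp
  obtain x0 where x0: "x0 \<in> K" "\<And>y. y \<in> K \<Longrightarrow> l x0 \<le> l y"
    using continuous_attains_inf[OF cK _ continuous_on_subset[OF lc]] gK by blast
  have "x0 \<noteq> 0"
  proof
    assume "x0 = 0"
    then have "e \<le> 0" using x0(1) char_zero[OF c] unfolding K_def by simp
    moreover have "e > 0" using g unfolding e_def by simp
    ultimately show False by simp
  qed
  hence pos: "l x0 > 0" using lf unfolding length_function_def
    by (metis less_eq_real_def)
  show ?thesis
  proof (intro exI[of _ "l x0"] conjI allI impI pos)
    fix x assume "l x < l x0"
    hence "x \<notin> K" using x0(2) by force
    hence "cmod (c x - 1) < e" unfolding K_def by simp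
    thus "c x \<noteq> c g" unfolding e_def by auto
  qed
qed

theorem mainTheorem9:
  fixes l :: "'a::{topological_ab_group_add, t2_space} \<Rightarrow> real"
    and H :: "nat \<Rightarrow> 'a set"
    and F :: "('a \<Rightarrow> complex) set"
  assumes "compact (UNIV :: 'a set)"
    and "length_function l" and "continuous_on UNIV l"
    and "\<And>n. closed (H n)" and "\<And>n. is_subgroup (H n)"
    and "(\<lambda>n. hausdorff_dist_l l (H n) UNIV) \<longlonglongrightarrow> 0"
    and "finite F" and "F \<subseteq> dual_group - {(\<lambda>_. 1)}"
  shows "\<exists>N. \<forall>n\<ge>N. annihilator (H n) \<inter> F = {}"
proof -
  obtain xm where xm: "\<And>y. l y \<le> l xm"
    using continuous_attains_sup[OF assms(1) _ assms(3)] by blast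
  have l0: "\<And>y. 0 \<le> l y" using assms(2) unfolding length_function_def by blast
  have one: "\<forall>c\<in>F. eventually (\<lambda>n. c \<notin> annihilator (H n)) sequentially"
  proof
    fix c assume cF: "c \<in> F"
    hence c: "c \<in> dual_group" and "c \<noteq> (\<lambda>_. 1)" using assms(8) by auto
    then obtain g where g: "c g \<noteq> 1" by auto
    obtain \<delta> where d: "\<delta> > 0" "\<And>x. l x < \<delta> \<Longrightarrow> c x \<noteq> c g"
      using char_delta[OF assms(1-3) c g] by blast
    have ev: "eventually (\<lambda>n. dist (hausdorff_dist_l l (H n) UNIV) 0 < \<delta>) sequentially"
      using assms(6) d(1) by (simp add: tendsto_iff)
    show "eventually (\<lambda>n. c \<notin> annihilator (H n)) sequentially"
    proof (rule eventually_mono[OF ev])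
      fix n assume "dist (hausdorff_dist_l l (H n) UNIV) 0 < \<delta>"
      hence hd: "hausdorff_dist_l l (H n) UNIV < \<delta>" by simp
      have H0: "0 \<in> H n" using assms(5) unfolding is_subgroup_def by blast
      have bb: "\<And>b. bdd_below ((\<lambda>a. dist_l l a b) ` H n)"
        unfolding dist_l_def using l0 by (meson bdd_belowI2)
      have le: "\<And>b. (INF a\<in>H n. dist_l l a b) \<le> l xm"
      proof -
        fix b
        have "(INF a\<in>H n. dist_l l a b) \<le> dist_l l 0 b"
          by (rule cINF_lower[OF bb H0])
        also have "\<dots> \<le> l xm" unfolding dist_l_def using xm by simp
        finally show "(INF a\<in>H n. dist_l l a b) \<le> l xm" .
      qed
      have "(INF a\<in>H n. dist_l l a g) \<le> (SUP b\<in>UNIV. INF a\<in>H n. dist_l l a b)"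
        by (rule cSUP_upper) (auto intro!: bdd_aboveI2[where M="l xm"] le)
      also have "\<dots> \<le> hausdorff_dist_l l (H n) UNIV"
        unfolding hausdorff_dist_l_def by simp
      finally have "(INF a\<in>H n. dist_l l a g) < \<delta>" using hd by simp
      then obtain a where a: "a \<in> H n" "l (- a + g) < \<delta>"
        using cINF_less_iff[OF _ bb] H0 unfolding dist_l_def by blast
      show "c \<notin> annihilator (H n)"
      proof
        assume "c \<in> annihilator (H n)"
        hence "c a = 1" using a(1) unfolding annihilator_def by blast
        moreover have "c (a + (- a + g)) = c a * c (- a + g)"
          using c unfolding dual_group_def is_character_def by blast
        ultimately have "c (- a + g) = c g" by simp
        with d(2)[OF a(2)] show False by simp
      qed
    qed
  qed
  have "eventually (\<lambda>n. \<forall>c\<in>F. c \<notin> annihilator (H n)) sequentially"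
    using eventually_ball_finite[OF assms(7) one] .
  then obtain N where "\<And>n. n \<ge> N \<Longrightarrow> \<forall>c\<in>F. c \<notin> annihilator (H n)"
    unfolding eventually_sequentially by blast
  thus ?thesis by blast
qed

end
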